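(* Let $a,b\in(0,1]$ and let $f:[0,1]\to[0,1]$ be $$f(x)=\begin{cases} x(1+a-ax), & 0\le x\le \tfrac12,\\ x(1-b+bx), & \tfrac12<x\le 1.\end{cases}$$ Let $x_0\in[0,1]\setminus\{\tfrac12\}$ and $x_i=f^i(x_0)$, and suppose the orbit $(x_i)_{i\ge0}$ avoids $\tfrac12$ (so that $f'(x_i)$ exists for all $i$). Then the Lyapunov exponent $$\lambda(x_0)=\lim_{n\to\infty}\frac1n\sum_{i=0}^{n-1}\ln|f'(x_i)|,$$ whenever this limit exists, is non-negative.
   Context: $f^i$ denotes the $i$-fold composition of $f$; $f$ is not differentiable at $\tfrac12$. *)

theory Defs
  imports "HOL-Analysis.Analysis"
begin

text \<open>It is written on all of the real line by the same two
formulas (first branch for x <= 1/2, second branch for x > 1/2); only its values on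
[0,1] matter, and the derivative at the endpoints 0 and 1 coincides with the
one-sided derivative of the map on [0,1].\<close>
definition fmap :: "real \<Rightarrow> real \<Rightarrow> real \<Rightarrow> real" where
  "fmap a b x = (if x \<le> 1/2 then x * (1 + a - a * x) else x * (1 - b + b * x))"

end

theory Submission
  imports Defs
begin

lemma fmap_range:
  fixes a b x :: real
  assumes "0 < a" "a \<le> 1" "0 < b" "b \<le> 1" "0 \<le> x" "x \<le> 1"
  shows "0 \<le> fmap a b x \<and> fmap a b x \<le> 1"
proof (cases "x \<le> 1/2")
  case True
  have "a * x \<le> a * 1" using assms by (intro mult_left_mono) auto
  then have "0 \<le> 1 + a - a * x" by linarith
  moreover have "0 \<le> a * x" using assms by simp
  then have "1 + a - a * x \<le> 2" using assms by linarith
  ultimately have "x * (1 + a - a * x) \<le> (1/2) * 2"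
    using True assms by (intro mult_mono) auto
  moreover have "0 \<le> x * (1 + a - a * x)" using \<open>0 \<le> 1 + a - a * x\<close> assms by simp
  ultimately show ?thesis using True by (simp add: fmap_def)
next
  case False
  have h1: "b * (1 - x) \<le> 1 * 1" using assms by (intro mult_mono) auto
  have h2: "0 \<le> b * (1 - x)" using assms by simp
  have "1 - b + b * x = 1 - b * (1 - x)" by (simp add: algebra_simps)
  then have c1: "0 \<le> 1 - b + b * x" and c2: "1 - b + b * x \<le> 1" using h1 h2 by auto
  have "x * (1 - b + b * x) \<le> 1 * 1" using mult_mono[OF assms(6) c2] c1 by simp
  moreover have "0 \<le> x * (1 - b + b * x)" using c1 assms(5) by simp
  ultimately have "x * (1 - b + b * x) \<le> 1" "0 \<le> x * (1 - b + b * x)" by simp_all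
  then show ?thesis using False by (simp add: fmap_def)
qed

lemma fmap_deriv:
  fixes a b x :: real
  assumes "0 < a" "a \<le> 1" "0 < b" "b \<le> 1" "0 \<le> x" "x \<le> 1" "x \<noteq> 1/2"
  shows "\<bar>deriv (fmap a b) x\<bar> \<ge> 1"
proof (cases "x < 1/2")
  case True
  have d: "((\<lambda>y. y * (1 + a - a * y)) has_field_derivative (1 + a - 2 * a * x)) (at x)"
    by (auto intro!: derivative_eq_intros simp: algebra_simps)
  have "(fmap a b has_field_derivative (1 + a - 2 * a * x)) (at x)"
    by (rule has_field_derivative_transform_within_open[OF d, of "{..<1/2}"])
       (use True in \<open>auto simp: fmap_def\<close>)
  then have "deriv (fmap a b) x = 1 + a - 2 * a * x" by (rule DERIV_imp_deriv)
  moreover have "a * (2 * x) \<le> a * 1" using True assms by (intro mult_left_mono) auto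
  ultimately show ?thesis by simp
next
  case False
  then have xg: "x > 1/2" using assms by auto
  have d: "((\<lambda>y. y * (1 - b + b * y)) has_field_derivative (1 - b + 2 * b * x)) (at x)"
    by (auto intro!: derivative_eq_intros simp: algebra_simps)
  have "(fmap a b has_field_derivative (1 - b + 2 * b * x)) (at x)"
    by (rule has_field_derivative_transform_within_open[OF d, of "{1/2<..}"])
       (use xg in \<open>auto simp: fmap_def\<close>)
  then have "deriv (fmap a b) x = 1 - b + 2 * b * x" by (rule DERIV_imp_deriv)
  moreover have "b * 1 \<le> b * (2 * x)" using xg assms by (intro mult_left_mono) auto
  ultimately show ?thesis by simp
qed

theorem proposition4p1:
  fixes a b x0 L :: real
  assumes "0 < a" "a \<le> 1" "0 < b" "b \<le> 1"
    and "0 \<le> x0" "x0 \<le> 1"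
    and "\<forall>i. (fmap a b ^^ i) x0 \<noteq> 1/2"
    and "(\<lambda>n. (\<Sum>i<n. ln \<bar>deriv (fmap a b) ((fmap a b ^^ i) x0)\<bar>) / real n) \<longlonglongrightarrow> L"
  shows "L \<ge> 0"
proof -
  have inv: "0 \<le> (fmap a b ^^ i) x0 \<and> (fmap a b ^^ i) x0 \<le> 1" for i
    by (induction i) (use fmap_range[OF assms(1-4)] assms(5,6) in auto)
  have "ln \<bar>deriv (fmap a b) ((fmap a b ^^ i) x0)\<bar> \<ge> 0" for i
    using fmap_deriv[OF assms(1-4)] inv[of i] assms(7) by auto
  then have "\<forall>n\<ge>0. 0 \<le> (\<Sum>i<n. ln \<bar>deriv (fmap a b) ((fmap a b ^^ i) x0)\<bar>) / real n"
    by (auto intro!: divide_nonneg_nonneg sum_nonneg)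
  then show ?thesis by (intro LIMSEQ_le_const[OF assms(8)]) blast
qed

end
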